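(* Let $g\ge 1$. The complex free-nilpotent Lie algebra $N(2,g)$ of nilpotency class $2$ on $g$ generators admits a periodic derivation if and only if $g\le 3$.
   Context: $N(c,g)$ denotes the free-nilpotent complex Lie algebra of nilpotency class $c$ on $g$ generators (the free Lie algebra on $g$ generators modulo the $(c+1)$-st term of its lower central series). A derivation $D$ of a Lie algebra is called periodic if there is an integer $m\ge 1$ with $D^m=\mathrm{id}$. *)

theory Defs
  imports Complex_Main
begin

text \<open>Concrete model of the complex free-nilpotent Lie algebra N(2,g) of class 2 on g
generators: N(2,g) = V \<oplus> \<Lambda>^2 V with V = C^g, bracket [(v,a),(w,b)] = (0, v \<and> w).
An element is a pair (v, a) with v a vector indexed by {0..<g} and a an antisymmetric
g x g matrix (the coordinates of an element of \<Lambda>^2 V w.r.t. e_i \<and> e_j, i<j).\<close>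

type_synonym n2el = "(nat \<Rightarrow> complex) \<times> (nat \<Rightarrow> nat \<Rightarrow> complex)"

definition N2_carrier :: "nat \<Rightarrow> n2el set" where
  "N2_carrier g = {(v, a). (\<forall>i. g \<le> i \<longrightarrow> v i = 0) \<and>
                           (\<forall>i j. a i j = - a j i) \<and>
                           (\<forall>i j. g \<le> i \<longrightarrow> a i j = 0)}"

definition n2_add :: "n2el \<Rightarrow> n2el \<Rightarrow> n2el" where
  "n2_add x y = (\<lambda>i. fst x i + fst y i, \<lambda>i j. snd x i j + snd y i j)"

definition n2_smul :: "complex \<Rightarrow> n2el \<Rightarrow> n2el" where
  "n2_smul c x = (\<lambda>i. c * fst x i, \<lambda>i j. c * snd x i j)"

definition n2_bracket :: "n2el \<Rightarrow> n2el \<Rightarrow> n2el" where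
  "n2_bracket x y = (\<lambda>i. 0, \<lambda>i j. fst x i * fst y j - fst x j * fst y i)"

definition N2_derivation :: "nat \<Rightarrow> (n2el \<Rightarrow> n2el) \<Rightarrow> bool" where
  "N2_derivation g D \<longleftrightarrow>
     (\<forall>x\<in>N2_carrier g. D x \<in> N2_carrier g) \<and>
     (\<forall>x\<in>N2_carrier g. \<forall>y\<in>N2_carrier g. D (n2_add x y) = n2_add (D x) (D y)) \<and>
     (\<forall>c. \<forall>x\<in>N2_carrier g. D (n2_smul c x) = n2_smul c (D x)) \<and>
     (\<forall>x\<in>N2_carrier g. \<forall>y\<in>N2_carrier g.
        D (n2_bracket x y) = n2_add (n2_bracket (D x) y) (n2_bracket x (D y)))"

definition periodic_on :: "'a set \<Rightarrow> ('a \<Rightarrow> 'a) \<Rightarrow> bool" where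
  "periodic_on S D \<longleftrightarrow> (\<exists>m::nat. m \<ge> 1 \<and> (\<forall>x\<in>S. (D ^^ m) x = x))"

end

theory Submission
  imports Defs
begin

lemma carrier_D:
  assumes "x \<in> N2_carrier g"
  shows "(\<forall>i. g \<le> i \<longrightarrow> fst x i = 0) \<and> (\<forall>i j. snd x i j = - snd x j i) \<and> (\<forall>i j. g \<le> i \<longrightarrow> snd x i j = 0)"
proof -
  obtain v a where xv: "x = (v, a)" by (cases x)
  show ?thesis using assms unfolding xv N2_carrier_def mem_Collect_eq prod.case fst_conv snd_conv .
qed

lemma carrier_I:
  assumes "\<forall>i. g \<le> i \<longrightarrow> v i = 0" "\<forall>i j. a i j = - a j i" "\<forall>i j. g \<le> i \<longrightarrow> a i j = 0"
  shows "(v, a) \<in> N2_carrier g"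
  unfolding N2_carrier_def mem_Collect_eq prod.case using assms by blast

lemma neg_self: "(x::complex) = - x \<Longrightarrow> x = 0"
proof -
  assume h: "x = - x"
  have "x + x = 0" using h by (metis add.right_inverse)
  then show "x = 0" by (metis mult_2 mult_eq_0_iff zero_neq_numeral)
qed


definition Dc :: "(nat \<Rightarrow> complex) \<Rightarrow> n2el \<Rightarrow> n2el" where
  "Dc c x = (\<lambda>i. c i * fst x i, \<lambda>i j. (c i + c j) * snd x i j)"

lemma Dc_pow: "(Dc c ^^ n) x = (\<lambda>i. c i ^ n * fst x i, \<lambda>i j. (c i + c j) ^ n * snd x i j)"
  by (induction n) (simp_all add: Dc_def algebra_simps)

lemma Dc_der: "N2_derivation g (Dc c)"
  unfolding N2_derivation_def
proof (intro conjI ballI allI)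
  fix x assume x: "x \<in> N2_carrier g"
  obtain v a where xv: "x = (v, a)" by (cases x)
  have v: "\<forall>i. g \<le> i \<longrightarrow> v i = 0" and an: "\<forall>i j. a i j = - a j i"
    and az: "\<forall>i j. g \<le> i \<longrightarrow> a i j = 0" using x unfolding xv N2_carrier_def by blast+
  have "Dc c x = (\<lambda>i. c i * v i, \<lambda>i j. (c i + c j) * a i j)" by (simp add: Dc_def xv)
  moreover have "(\<lambda>i. c i * v i, \<lambda>i j. (c i + c j) * a i j) \<in> N2_carrier g"
  proof -
    have "\<forall>i j. (c i + c j) * a i j = - ((c j + c i) * a j i)"
      using an by (metis add.commute mult_minus_right)
    moreover have "\<forall>i. g \<le> i \<longrightarrow> c i * v i = 0" using v by simp
    moreover have "\<forall>i j. g \<le> i \<longrightarrow> (c i + c j) * a i j = 0" using az by simp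
    ultimately show ?thesis unfolding N2_carrier_def mem_Collect_eq prod.case by blast
  qed
  ultimately show "Dc c x \<in> N2_carrier g" by simp
next
  fix x y
  show "Dc c (n2_add x y) = n2_add (Dc c x) (Dc c y)"
    by (simp add: Dc_def n2_add_def fun_eq_iff distrib_left)
next
  fix a x
  show "Dc c (n2_smul a x) = n2_smul a (Dc c x)"
    by (simp add: Dc_def n2_smul_def fun_eq_iff mult.left_commute)
next
  fix x y
  show "Dc c (n2_bracket x y) = n2_add (n2_bracket (Dc c x) y) (n2_bracket x (Dc c y))"
    by (simp add: Dc_def n2_add_def n2_bracket_def fun_eq_iff ring_distribs mult_ac)
qed

definition om :: complex where "om = Complex (-1/2) (sqrt 3 / 2)"

lemma om_eq: "om^2 + om + 1 = 0"
  by (simp add: om_def complex_eq_iff power2_eq_square algebra_simps)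

lemma om3: "om^3 = 1"
proof -
  have "om^3 - 1 = (om - 1) * (om^2 + om + 1)" by (simp add: algebra_simps power2_eq_square power3_eq_cube)
  then show ?thesis using om_eq by simp
qed

lemma om6: "om^6 = 1"
proof -
  have "om^6 = (om^3)^2" by (simp add: power_mult[symmetric])
  then show ?thesis using om3 by simp
qed

lemma sum1: "(1 + om)^6 = 1"
proof -
  have "1 + om = -(om^2)" using om_eq by algebra
  then have "(1+om)^6 = (om^6)^2" by (simp add: power_mult[symmetric] power_minus_even)
  then show ?thesis using om6 by simp
qed

lemma sum2: "(1 + om^2)^6 = 1"
proof -
  have "1 + om^2 = - om" using om_eq by algebra
  then show ?thesis using om6 by (simp add: power_minus_even)
qed

lemma sum3: "(om + om^2)^6 = 1"
proof -
  have "om + om^2 = - 1" using om_eq by algebra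
  then show ?thesis by simp
qed

lemma easy:
  assumes "g \<le> 3"
  shows "\<exists>D. N2_derivation g D \<and> periodic_on (N2_carrier g) D"
proof (intro exI conjI)
  let ?c = "\<lambda>i::nat. om ^ i"
  show "N2_derivation g (Dc ?c)" by (rule Dc_der)
  have cpow: "?c i ^ 6 = 1" for i
    by (metis om6 power_one mult.commute power_mult)
  have cs: "(?c i + ?c j)^6 = 1" if "i < 3" "j < 3" "i \<noteq> j" for i j
  proof -
    have "i \<in> {0,1,2}" "j \<in> {0,1,2}" using that by auto
    then show ?thesis using that sum1 sum2 sum3
      by (auto simp: add.commute power2_eq_square)
  qed
  show "periodic_on (N2_carrier g) (Dc ?c)"
    unfolding periodic_on_def
  proof (intro exI[of _ 6] conjI ballI)
    fix x assume x: "x \<in> N2_carrier g"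
    obtain v a where xv: "x = (v, a)" by force
    have v: "\<And>i. g \<le> i \<Longrightarrow> v i = 0" and anti: "\<And>i j. a i j = - a j i"
      and az: "\<And>i j. g \<le> i \<Longrightarrow> a i j = 0" using carrier_D[OF x] unfolding xv fst_conv snd_conv by blast+
    have "(\<lambda>i. ?c i ^ 6 * v i) = v" using cpow by simp
    moreover have "(\<lambda>i j. (?c i + ?c j) ^ 6 * a i j) = a"
    proof (intro ext)
      fix i j
      show "(?c i + ?c j) ^ 6 * a i j = a i j"
      proof (cases "i < g \<and> j < g \<and> i \<noteq> j")
        case True then show ?thesis using cs[of i j] assms by simp
      next
        case False
        have "a i j = 0"
        proof -
          { assume "i = j" then have ?thesis using neg_self[OF anti[of i i]] by simp }
          moreover { assume "g \<le> i" then have ?thesis using az by simp }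
          moreover { assume "g \<le> j" then have ?thesis using az[of j i] anti[of i j] by simp }
          ultimately show ?thesis using False by linarith
        qed
        then show ?thesis by simp
      qed
    qed
    ultimately show "(Dc ?c ^^ 6) x = x" by (simp add: Dc_pow xv)
  qed simp
qed


definition Vg :: "nat \<Rightarrow> (nat \<Rightarrow> complex) set" where
  "Vg g = {v. \<forall>i. g \<le> i \<longrightarrow> v i = 0}"

definition wedge :: "(nat \<Rightarrow> complex) \<Rightarrow> (nat \<Rightarrow> complex) \<Rightarrow> nat \<Rightarrow> nat \<Rightarrow> complex" where
  "wedge u w = (\<lambda>i j. u i * w j - u j * w i)"

lemma der_zero:
  assumes "N2_derivation g D"
  shows "D (\<lambda>i. 0, \<lambda>i j. 0) = (\<lambda>i. 0, \<lambda>i j. 0)"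
proof -
  let ?x = "(\<lambda>i. 0::complex, \<lambda>i j. 0::complex)"
  have c: "?x \<in> N2_carrier g" by (simp add: N2_carrier_def)
  have "n2_smul 0 ?x = ?x" by (simp add: n2_smul_def)
  then have "D ?x = n2_smul 0 (D ?x)" using assms c unfolding N2_derivation_def by metis
  also have "\<dots> = ?x" by (simp add: n2_smul_def)
  finally show ?thesis .
qed

lemma der_central:
  assumes D: "N2_derivation g D" and g: "2 \<le> g" and z: "(\<lambda>i. 0, a) \<in> N2_carrier g"
  shows "fst (D (\<lambda>i. 0, a)) = (\<lambda>i. 0)"
proof
  fix i
  let ?z = "(\<lambda>i. 0::complex, a)"
  have Dz: "D ?z \<in> N2_carrier g" using D z unfolding N2_derivation_def by blast
  show "fst (D ?z) i = 0"
  proof (cases "g \<le> i")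
    case True then show ?thesis using carrier_D[OF Dz] by blast
  next
    case False
    define j where "j = (if i = 0 then 1 else (0::nat))"
    have j: "j < g" "j \<noteq> i" using g False by (auto simp: j_def)
    let ?y = "(\<lambda>k. if k = j then 1 else 0::complex, \<lambda>k l. 0::complex)"
    have y: "?y \<in> N2_carrier g" using j by (auto simp: N2_carrier_def)
    have Dy: "D ?y \<in> N2_carrier g" using D y unfolding N2_derivation_def by blast
    have b1: "n2_bracket ?z ?y = (\<lambda>i. 0, \<lambda>i j. 0)" by (simp add: n2_bracket_def)
    have b2: "n2_bracket ?z (D ?y) = (\<lambda>i. 0, \<lambda>i j. 0)" by (simp add: n2_bracket_def)
    have "D (n2_bracket ?z ?y) = n2_add (n2_bracket (D ?z) ?y) (n2_bracket ?z (D ?y))"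
      using D y z unfolding N2_derivation_def by blast
    then have "(\<lambda>i. 0, \<lambda>i j. 0) = n2_add (n2_bracket (D ?z) ?y) (\<lambda>i. 0, \<lambda>i j. 0)"
      using b1 b2 der_zero[OF D] by simp
    then have "snd (n2_add (n2_bracket (D ?z) ?y) (\<lambda>i. 0, \<lambda>i j. 0)) i j = 0"
      by (metis snd_conv)
    then show ?thesis using j by (simp add: n2_add_def n2_bracket_def)
  qed
qed

definition Lop :: "(n2el \<Rightarrow> n2el) \<Rightarrow> (nat \<Rightarrow> complex) \<Rightarrow> (nat \<Rightarrow> complex)" where
  "Lop D u = fst (D (u, \<lambda>i j. 0))"

lemma der_fst:
  assumes D: "N2_derivation g D" and g: "2 \<le> g" and x: "x \<in> N2_carrier g"
  shows "fst (D x) = Lop D (fst x)"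
proof -
  obtain u a where xu: "x = (u, a)" by force
  have xu1: "\<forall>i. g \<le> i \<longrightarrow> u i = 0" "\<forall>i j. a i j = - a j i" "\<forall>i j. g \<le> i \<longrightarrow> a i j = 0"
    using carrier_D[OF x] unfolding xu fst_conv snd_conv by blast+
  have x1: "(u, \<lambda>i j. 0) \<in> N2_carrier g" by (rule carrier_I) (simp_all add: xu1(1))
  have x2: "(\<lambda>i. 0, a) \<in> N2_carrier g" by (rule carrier_I) (simp, rule xu1(2), rule xu1(3))
  have "x = n2_add (u, \<lambda>i j. 0) (\<lambda>i. 0, a)" by (simp add: xu n2_add_def)
  then have "D x = n2_add (D (u, \<lambda>i j. 0)) (D (\<lambda>i. 0, a))"
    using D x1 x2 unfolding N2_derivation_def by metis
  then show ?thesis using der_central[OF D g x2] by (simp add: n2_add_def Lop_def xu)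
qed

lemma der_pow:
  assumes D: "N2_derivation g D" and g: "2 \<le> g" and x: "x \<in> N2_carrier g"
  shows "(D ^^ n) x \<in> N2_carrier g \<and> fst ((D ^^ n) x) = (Lop D ^^ n) (fst x)"
proof (induction n)
  case 0 then show ?case using x by simp
next
  case (Suc n)
  then have "D ((D ^^ n) x) \<in> N2_carrier g" using D unfolding N2_derivation_def by blast
  moreover have "fst (D ((D ^^ n) x)) = Lop D (fst ((D ^^ n) x))"
    using der_fst[OF D g] Suc by blast
  moreover have "(D ^^ Suc n) x = D ((D ^^ n) x)" by simp
  moreover have "(Lop D ^^ Suc n) (fst x) = Lop D ((Lop D ^^ n) (fst x))" by simp
  ultimately show ?case using Suc by metis
qed

lemma L_per:
  assumes D: "N2_derivation g D" and g: "2 \<le> g" and p: "periodic_on (N2_carrier g) D"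
  obtains m where "1 \<le> m" "\<And>u. u \<in> Vg g \<Longrightarrow> (Lop D ^^ m) u = u"
    "\<And>x. x \<in> N2_carrier g \<Longrightarrow> (D ^^ m) x = x"
proof -
  obtain m where m: "1 \<le> m" "\<And>x. x \<in> N2_carrier g \<Longrightarrow> (D ^^ m) x = x"
    using p unfolding periodic_on_def by blast
  have "(Lop D ^^ m) u = u" if u: "u \<in> Vg g" for u
  proof -
    have c: "(u, \<lambda>i j. 0) \<in> N2_carrier g" using u by (simp add: N2_carrier_def Vg_def)
    show ?thesis using der_pow[OF D g c, of m] m(2)[OF c] by simp
  qed
  then show ?thesis using that m by blast
qed

definition linV :: "nat \<Rightarrow> ((nat \<Rightarrow> complex) \<Rightarrow> (nat \<Rightarrow> complex)) \<Rightarrow> bool" where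
  "linV g F \<longleftrightarrow> (\<forall>u\<in>Vg g. F u \<in> Vg g) \<and>
     (\<forall>u\<in>Vg g. \<forall>w\<in>Vg g. F (\<lambda>i. u i + w i) = (\<lambda>i. F u i + F w i)) \<and>
     (\<forall>c. \<forall>u\<in>Vg g. F (\<lambda>i. c * u i) = (\<lambda>i. c * F u i))"

lemma L_lin:
  assumes D: "N2_derivation g D"
  shows "linV g (Lop D)"
  unfolding linV_def
proof (intro conjI ballI allI)
  fix u assume u: "u \<in> Vg g"
  have c: "(u, \<lambda>i j. 0) \<in> N2_carrier g" using u by (simp add: N2_carrier_def Vg_def)
  then have "D (u, \<lambda>i j. 0) \<in> N2_carrier g" using D unfolding N2_derivation_def by blast
  then show "Lop D u \<in> Vg g" using carrier_D unfolding Lop_def Vg_def mem_Collect_eq by blast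
  fix c
  have "(\<lambda>i. c * u i, \<lambda>i j. 0) = n2_smul c (u, \<lambda>i j. 0)" by (simp add: n2_smul_def)
  then have "D (\<lambda>i. c * u i, \<lambda>i j. 0) = n2_smul c (D (u, \<lambda>i j. 0))"
    using D c unfolding N2_derivation_def by metis
  then show "Lop D (\<lambda>i. c * u i) = (\<lambda>i. c * Lop D u i)" by (simp add: Lop_def n2_smul_def)
next
  fix u w assume u: "u \<in> Vg g" and w: "w \<in> Vg g"
  have cu: "(u, \<lambda>i j. 0) \<in> N2_carrier g" using u by (simp add: N2_carrier_def Vg_def)
  have cw: "(w, \<lambda>i j. 0) \<in> N2_carrier g" using w by (simp add: N2_carrier_def Vg_def)
  have "(\<lambda>i. u i + w i, \<lambda>i j. 0) = n2_add (u, \<lambda>i j. 0) (w, \<lambda>i j. 0)" by (simp add: n2_add_def)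
  then have "D (\<lambda>i. u i + w i, \<lambda>i j. 0) = n2_add (D (u, \<lambda>i j. 0)) (D (w, \<lambda>i j. 0))"
    using D cu cw unfolding N2_derivation_def by metis
  then show "Lop D (\<lambda>i. u i + w i) = (\<lambda>i. Lop D u i + Lop D w i)" by (simp add: Lop_def n2_add_def)
qed

lemma wedge_cond:
  assumes D: "N2_derivation g D" and g: "2 \<le> g" and p: "periodic_on (N2_carrier g) D"
  and u: "u \<in> Vg g" and w: "w \<in> Vg g"
  and Lu: "Lop D u = (\<lambda>i. \<alpha> * u i)" and Lw: "Lop D w = (\<lambda>i. \<gamma> * w i)"
  and nz: "wedge u w i0 j0 \<noteq> 0"
  shows "(\<alpha> + \<gamma>) ^ m' = 1 \<or> \<not> (\<forall>x\<in>N2_carrier g. (D ^^ m') x = x)"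
proof -
  let ?w = "wedge u w"
  have cu: "(u, \<lambda>i j. 0) \<in> N2_carrier g" using u by (simp add: N2_carrier_def Vg_def)
  have cw: "(w, \<lambda>i j. 0) \<in> N2_carrier g" using w by (simp add: N2_carrier_def Vg_def)
  have cz: "(\<lambda>i. 0, \<lambda>i j. c * ?w i j) \<in> N2_carrier g" for c
    using u w by (auto simp: N2_carrier_def Vg_def wedge_def algebra_simps)
  have Du: "D (u, \<lambda>i j. 0) = (\<lambda>i. \<alpha> * u i, snd (D (u, \<lambda>i j. 0)))"
    using Lu by (simp add: Lop_def prod_eq_iff)
  have Dw: "D (w, \<lambda>i j. 0) = (\<lambda>i. \<gamma> * w i, snd (D (w, \<lambda>i j. 0)))"
    using Lw by (simp add: Lop_def prod_eq_iff)
  have br: "n2_bracket (u, \<lambda>i j. 0) (w, \<lambda>i j. 0) = (\<lambda>i. 0, ?w)"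
    by (simp add: n2_bracket_def wedge_def)
  have "D (n2_bracket (u, \<lambda>i j. 0) (w, \<lambda>i j. 0)) =
     n2_add (n2_bracket (D (u, \<lambda>i j. 0)) (w, \<lambda>i j. 0)) (n2_bracket (u, \<lambda>i j. 0) (D (w, \<lambda>i j. 0)))"
    using D cu cw unfolding N2_derivation_def by blast
  then have D0: "D (\<lambda>i. 0, ?w) = n2_add (n2_bracket (D (u, \<lambda>i j. 0)) (w, \<lambda>i j. 0)) (n2_bracket (u, \<lambda>i j. 0) (D (w, \<lambda>i j. 0)))"
    unfolding br .
  have b1: "n2_bracket (D (u, \<lambda>i j. 0)) (w, \<lambda>i j. 0) = (\<lambda>i. 0, \<lambda>i j. \<alpha> * u i * w j - \<alpha> * u j * w i)"
    by (subst Du) (simp add: n2_bracket_def)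
  have b2: "n2_bracket (u, \<lambda>i j. 0) (D (w, \<lambda>i j. 0)) = (\<lambda>i. 0, \<lambda>i j. u i * (\<gamma> * w j) - u j * (\<gamma> * w i))"
    by (subst Dw) (simp add: n2_bracket_def)
  have e: "n2_add (\<lambda>i. 0, \<lambda>i j. \<alpha> * u i * w j - \<alpha> * u j * w i) (\<lambda>i. 0, \<lambda>i j. u i * (\<gamma> * w j) - u j * (\<gamma> * w i))
      = (\<lambda>i. 0, \<lambda>i j. (\<alpha> + \<gamma>) * ?w i j)"
    by (simp add: n2_add_def wedge_def fun_eq_iff algebra_simps)
  have D1: "D (\<lambda>i. 0, ?w) = (\<lambda>i. 0, \<lambda>i j. (\<alpha> + \<gamma>) * ?w i j)"
    using D0 b1 b2 e by simp
  have cz0: "(\<lambda>i. 0, ?w) \<in> N2_carrier g" using cz[of 1] by simp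
  have smul: "D (n2_smul c (\<lambda>i. 0, ?w)) = n2_smul c (D (\<lambda>i. 0, ?w))" for c
    using D cz0 unfolding N2_derivation_def by blast
  have Dc: "D (\<lambda>i. 0, \<lambda>i j. c * ?w i j) = (\<lambda>i. 0, \<lambda>i j. c * ((\<alpha> + \<gamma>) * ?w i j))" for c
  proof -
    have "(\<lambda>i. 0, \<lambda>i j. c * ?w i j) = n2_smul c (\<lambda>i. 0, ?w)" by (simp add: n2_smul_def)
    then have "D (\<lambda>i. 0, \<lambda>i j. c * ?w i j) = n2_smul c (D (\<lambda>i. 0, ?w))"
      using smul by simp
    then show ?thesis using D1 by (simp add: n2_smul_def)
  qed
  have pw: "(D ^^ n) (\<lambda>i. 0, ?w) = (\<lambda>i. 0, \<lambda>i j. (\<alpha> + \<gamma>) ^ n * ?w i j)" for n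
  proof (induction n)
    case 0 then show ?case by simp
  next
    case (Suc n) then show ?case using Dc[of "(\<alpha> + \<gamma>) ^ n"] by (simp add: algebra_simps)
  qed
  show ?thesis
  proof (rule disjCI)
    assume "\<not> \<not> (\<forall>x\<in>N2_carrier g. (D ^^ m') x = x)"
    then have "(D ^^ m') (\<lambda>i. 0, ?w) = (\<lambda>i. 0, ?w)" using cz[of 1] by simp
    then have "(\<alpha> + \<gamma>) ^ m' * ?w i0 j0 = ?w i0 j0" unfolding pw by (metis snd_conv)
    then show "(\<alpha> + \<gamma>) ^ m' = 1" using nz by simp
  qed
qed



lemma linV_in: "linV g F \<Longrightarrow> u \<in> Vg g \<Longrightarrow> F u \<in> Vg g" unfolding linV_def by blast
lemma linV_add: "linV g F \<Longrightarrow> u \<in> Vg g \<Longrightarrow> w \<in> Vg g \<Longrightarrow> F (\<lambda>i. u i + w i) = (\<lambda>i. F u i + F w i)"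
  unfolding linV_def by blast
lemma linV_smul: "linV g F \<Longrightarrow> u \<in> Vg g \<Longrightarrow> F (\<lambda>i. c * u i) = (\<lambda>i. c * F u i)"
  unfolding linV_def by blast

lemma lin_sum:
  assumes F: "linV g F" and J: "finite J" and f: "\<forall>j\<in>J. f j \<in> Vg g"
  shows "(\<lambda>i. \<Sum>j\<in>J. c j * f j i) \<in> Vg g \<and>
         F (\<lambda>i. \<Sum>j\<in>J. c j * f j i) = (\<lambda>i. \<Sum>j\<in>J. c j * F (f j) i)"
  using J f
proof (induction J rule: finite_induct)
  case empty
  have z: "(\<lambda>i. 0::complex) \<in> Vg g" by (simp add: Vg_def)
  have sm: "\<And>c u. u \<in> Vg g \<Longrightarrow> F (\<lambda>i. c * u i) = (\<lambda>i. c * F u i)"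
    using F unfolding linV_def by blast
  have "F (\<lambda>i. 0) = (\<lambda>i. 0)" using sm[OF z, of 0] by simp
  then show ?case using z by simp
next
  case (insert x J)
  let ?s = "\<lambda>i. \<Sum>j\<in>J. c j * f j i"
  have IH: "?s \<in> Vg g" "F ?s = (\<lambda>i. \<Sum>j\<in>J. c j * F (f j) i)" using insert by auto
  have fx: "f x \<in> Vg g" using insert by auto
  have cfx: "(\<lambda>i. c x * f x i) \<in> Vg g" using fx by (simp add: Vg_def)
  have e: "(\<lambda>i. \<Sum>j\<in>insert x J. c j * f j i) = (\<lambda>i. c x * f x i + ?s i)"
    using insert by simp
  have "F (\<lambda>i. c x * f x i + ?s i) = (\<lambda>i. F (\<lambda>i. c x * f x i) i + F ?s i)"
    using linV_add[OF F cfx IH(1)] by simp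
  also have "F (\<lambda>i. c x * f x i) = (\<lambda>i. c x * F (f x) i)" using linV_smul[OF F fx] by simp
  finally show ?case using e IH insert cfx by (simp add: Vg_def)
qed

lemma linV_pow:
  assumes F: "linV g F" shows "linV g (F ^^ n)"
proof (induction n)
  case 0 then show ?case by (simp add: linV_def)
next
  case (Suc n)
  then show ?case using F unfolding linV_def by simp
qed

lemma eig_pow:
  assumes F: "linV g F" and x: "x \<in> Vg g" and Fx: "F x = (\<lambda>i. c * x i)"
  shows "(F ^^ n) x = (\<lambda>i. c ^ n * x i)"
proof (induction n)
  case 0 then show ?case by simp
next
  case (Suc n)
  have "(F ^^ Suc n) x = F (\<lambda>i. c ^ n * x i)" using Suc by simp
  also have "\<dots> = (\<lambda>i. c ^ n * F x i)" using linV_smul[OF F x] by simp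
  finally show ?case using Fx by (simp add: algebra_simps)
qed

lemma four_real:
  fixes a1 a2 b1 b2 c1 c2 d1 d2 :: real
  assumes "a1^2 + a2^2 = 1" "b1^2 + b2^2 = 1" "c1^2 + c2^2 = 1" "d1^2 + d2^2 = 1"
    "(a1+b1)^2 + (a2+b2)^2 = 1" "(a1+c1)^2 + (a2+c2)^2 = 1" "(a1+d1)^2 + (a2+d2)^2 = 1"
    "(b1+c1)^2 + (b2+c2)^2 = 1" "(b1+d1)^2 + (b2+d2)^2 = 1" "(c1+d1)^2 + (c2+d2)^2 = 1"
  shows False
proof -
  have "(a1+b1+c1+d1)^2 + (a2+b2+c2+d2)^2 =
     ((a1+b1)^2 + (a2+b2)^2) + ((a1+c1)^2 + (a2+c2)^2) + ((a1+d1)^2 + (a2+d2)^2)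
     + ((b1+c1)^2 + (b2+c2)^2) + ((b1+d1)^2 + (b2+d2)^2) + ((c1+d1)^2 + (c2+d2)^2)
     - 2 * ((a1^2 + a2^2) + (b1^2 + b2^2) + (c1^2 + c2^2) + (d1^2 + d2^2))"
    by algebra
  also have "\<dots> = -2" unfolding assms by simp
  finally have "(a1+b1+c1+d1)^2 + (a2+b2+c2+d2)^2 = -2" .
  moreover have "(a1+b1+c1+d1)^2 + (a2+b2+c2+d2)^2 \<ge> 0" by simp
  ultimately show False using assms by linarith
qed

lemma four_units:
  fixes a b c d :: complex
  assumes "norm a = 1" "norm b = 1" "norm c = 1" "norm d = 1"
    "norm (a + b) = 1" "norm (a + c) = 1" "norm (a + d) = 1"
    "norm (b + c) = 1" "norm (b + d) = 1" "norm (c + d) = 1"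
  shows False
proof -
  have sq: "\<And>z::complex. norm z = 1 \<Longrightarrow> (Re z)^2 + (Im z)^2 = 1"
    by (metis cmod_power2 power_one)
  note h = sq[OF assms(1)] sq[OF assms(2)] sq[OF assms(3)] sq[OF assms(4)]
    sq[OF assms(5)] sq[OF assms(6)] sq[OF assms(7)] sq[OF assms(8)] sq[OF assms(9)] sq[OF assms(10)]
  show False
    by (rule four_real[of "Re a" "Im a" "Re b" "Im b" "Re c" "Im c" "Re d" "Im d"]) (use h in simp_all)
qed

lemma ne_of_card: "k \<le> card A \<Longrightarrow> 0 < k \<Longrightarrow> \<exists>x. x \<in> A"
  by (cases "A = {}") auto

lemma four_dist: assumes "finite R" "4 \<le> card R"
  shows "\<exists>a b c d. a \<in> R \<and> b \<in> R \<and> c \<in> R \<and> d \<in> R \<and> a \<noteq> b \<and> a \<noteq> c \<and> a \<noteq> d \<and> b \<noteq> c \<and> b \<noteq> d \<and> c \<noteq> d"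
proof -
  obtain a where a: "a \<in> R" using ne_of_card[OF assms(2)] by auto
  let ?R1 = "R - {a}"
  have c1: "3 \<le> card ?R1" using assms a by simp
  obtain b where b: "b \<in> ?R1" using ne_of_card[OF c1] by auto
  let ?R2 = "?R1 - {b}"
  have c2: "2 \<le> card ?R2" using c1 b assms by simp
  obtain c where c: "c \<in> ?R2" using ne_of_card[OF c2] by auto
  let ?R3 = "?R2 - {c}"
  have c3: "1 \<le> card ?R3" using c2 c assms by simp
  obtain d where d: "d \<in> ?R3" using ne_of_card[OF c3] by auto
  show ?thesis using a b c d by blast
qed



definition zt :: "nat \<Rightarrow> complex" where "zt m = cis (2 * pi / real m)"

lemma zt_pow: "zt m ^ k = cis (2 * pi * real k / real m)"
  by (simp add: zt_def DeMoivre mult_ac)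

lemma zt_m: "0 < m \<Longrightarrow> zt m ^ m = 1"
  by (simp add: zt_pow)

lemma zt_inj: "0 < m \<Longrightarrow> k < m \<Longrightarrow> l < m \<Longrightarrow> zt m ^ k = zt m ^ l \<Longrightarrow> k = l"
  using bij_betw_roots_unity[of m] unfolding bij_betw_def inj_on_def zt_pow by auto

lemma zt_norm: "norm (zt m) = 1" by (simp add: zt_def)

lemma zt_nz: "zt m \<noteq> 0" using zt_norm[of m] by auto

definition Eop :: "((nat \<Rightarrow> complex) \<Rightarrow> (nat \<Rightarrow> complex)) \<Rightarrow> nat \<Rightarrow> nat \<Rightarrow> (nat \<Rightarrow> complex) \<Rightarrow> (nat \<Rightarrow> complex)" where
  "Eop L m k v = (\<lambda>i. \<Sum>j<m. (inverse (zt m) ^ (k * j) / of_nat m) * (L ^^ j) v i)"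

context
  fixes g :: nat and L and m :: nat
  assumes lin: "linV g L" and m1: "1 \<le> m" and per: "\<forall>u\<in>Vg g. (L ^^ m) u = u"
begin

lemma E_in: "v \<in> Vg g \<Longrightarrow> Eop L m k v \<in> Vg g"
  unfolding Eop_def using lin_sum[OF linV_pow[OF lin], of "{..<m}"] linV_in[OF linV_pow[OF lin]]
  by (simp add: Vg_def)

lemma E_eig:
  assumes v: "v \<in> Vg g"
  shows "L (Eop L m k v) = (\<lambda>i. zt m ^ k * Eop L m k v i)"
proof -
  let ?c = "\<lambda>j. inverse (zt m) ^ (k * j) / of_nat m"
  let ?f = "\<lambda>j. (L ^^ j) v"
  have f: "\<forall>j\<in>{..<m}. ?f j \<in> Vg g" using linV_in[OF linV_pow[OF lin] v] by blast
  have "L (Eop L m k v) = (\<lambda>i. \<Sum>j<m. ?c j * L (?f j) i)"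
    unfolding Eop_def using lin_sum[OF lin _ f, of ?c] by simp
  also have "\<dots> = (\<lambda>i. zt m ^ k * Eop L m k v i)"
  proof
    fix i
    define h where "h j = inverse (zt m) ^ (k * j) * (L ^^ j) v i" for j
    have e1: "?c j * L (?f j) i = zt m ^ k * h (Suc j) / of_nat m" for j
    proof -
      have "inverse (zt m) ^ (k * j) = zt m ^ k * inverse (zt m) ^ (k * Suc j)"
        using zt_nz[of m] by (simp add: power_add power_mult_distrib field_simps power_inverse)
      then show ?thesis by (simp add: h_def)
    qed
    have hm: "h m = h 0"
    proof -
      have "inverse (zt m) ^ (k * m) = 1"
        using zt_m[of m] m1 by (simp add: power_mult mult.commute[of k] power_inverse)
      then show ?thesis using per v by (simp add: h_def)
    qed
    have "(\<Sum>j<m. h (Suc j)) = (\<Sum>j<m. h j)"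
    proof -
      have "(\<Sum>j<Suc m. h j) = h 0 + (\<Sum>j<m. h (Suc j))" by (rule sum.lessThan_Suc_shift)
      moreover have "(\<Sum>j<Suc m. h j) = (\<Sum>j<m. h j) + h m" by simp
      ultimately show ?thesis using hm by simp
    qed
    then have "(\<Sum>j<m. ?c j * L (?f j) i) = zt m ^ k * (\<Sum>j<m. h j) / of_nat m"
      unfolding e1 by (simp add: sum_divide_distrib[symmetric] sum_distrib_left[symmetric])
    also have "\<dots> = zt m ^ k * Eop L m k v i"
      by (simp add: Eop_def h_def sum_divide_distrib sum_distrib_left)
    finally show "(\<Sum>j<m. ?c j * L (?f j) i) = zt m ^ k * Eop L m k v i" .
  qed
  finally show ?thesis .
qed

lemma E_fix:
  assumes x: "x \<in> Vg g" and Lx: "L x = (\<lambda>i. zt m ^ k * x i)"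
  shows "Eop L m k x = x"
proof
  fix i
  have "Eop L m k x i = (\<Sum>j<m. (inverse (zt m) ^ (k * j) / of_nat m) * ((zt m ^ k) ^ j * x i))"
    unfolding Eop_def using eig_pow[OF lin x Lx] by simp
  also have "\<dots> = (\<Sum>j<m. x i / of_nat m)"
  proof (rule sum.cong[OF refl])
    fix j
    have "inverse (zt m) ^ (k * j) * (zt m ^ k) ^ j = 1"
      using zt_nz[of m] by (simp add: power_mult[symmetric] power_inverse field_simps)
    then show "(inverse (zt m) ^ (k * j) / of_nat m) * ((zt m ^ k) ^ j * x i) = x i / of_nat m"
      by (metis (no_types, lifting) mult.assoc mult.commute mult.left_neutral times_divide_eq_left)
  qed
  also have "\<dots> = x i" using m1 by simp
  finally show "Eop L m k x i = x i" .
qed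

lemma E_sum:
  assumes v: "v \<in> Vg g"
  shows "(\<Sum>k<m. Eop L m k v i) = v i"
proof -
  have "(\<Sum>k<m. Eop L m k v i) = (\<Sum>j<m. (\<Sum>k<m. inverse (zt m) ^ (k * j)) * (L ^^ j) v i / of_nat m)"
    unfolding Eop_def by (subst sum.swap) (simp add: sum_distrib_right sum_divide_distrib)
  also have "\<dots> = (\<Sum>j\<in>{0}. (\<Sum>k<m. inverse (zt m) ^ (k * j)) * (L ^^ j) v i / of_nat m)"
  proof (rule sum.mono_neutral_right)
    show "\<forall>j\<in>{..<m} - {0}. (\<Sum>k<m. inverse (zt m) ^ (k * j)) * (L ^^ j) v i / of_nat m = 0"
    proof
      fix j assume j: "j \<in> {..<m} - {0}"
      let ?x = "inverse (zt m ^ j)"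
      have x1: "?x \<noteq> 1"
      proof
        assume "?x = 1"
        then have "zt m ^ j = zt m ^ 0" by (metis inverse_1 inverse_inverse_eq power_0)
        then show False using zt_inj[of m j 0] j m1 by auto
      qed
      have xm: "?x ^ m = 1" using zt_m[of m] m1
        by (metis mult.commute power_inverse power_mult power_one inverse_1 less_le_trans zero_less_one)
      have "(\<Sum>k<m. inverse (zt m) ^ (k * j)) = (\<Sum>k<m. ?x ^ k)"
      proof (rule sum.cong[OF refl])
        fix k
        show "inverse (zt m) ^ (k * j) = ?x ^ k" by (metis mult.commute power_inverse power_mult)
      qed
      also have "\<dots> = 0" using x1 xm by (simp add: sum_gp_strict)
      finally show "(\<Sum>k<m. inverse (zt m) ^ (k * j)) * (L ^^ j) v i / of_nat m = 0" by simp
    qed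
  qed (use m1 in auto)
  also have "\<dots> = v i" using m1 by simp
  finally show ?thesis .
qed

end


context
  fixes g :: nat and L and m :: nat
  assumes lin: "linV g L" and m1: "1 \<le> m" and per: "\<forall>u\<in>Vg g. (L ^^ m) u = u"
  and wc: "\<And>u w \<alpha> \<gamma> i j. u \<in> Vg g \<Longrightarrow> w \<in> Vg g \<Longrightarrow> L u = (\<lambda>i. \<alpha> * u i) \<Longrightarrow>
            L w = (\<lambda>i. \<gamma> * w i) \<Longrightarrow> wedge u w i j \<noteq> 0 \<Longrightarrow> (\<alpha> + \<gamma>) ^ m = 1"
begin

lemma E_lin: "linV g (Eop L m k)"
  unfolding linV_def
proof (intro conjI ballI allI)
  fix u assume u: "u \<in> Vg g"
  show "Eop L m k u \<in> Vg g" by (rule E_in[OF lin m1 per u])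
  fix c
  show "Eop L m k (\<lambda>i. c * u i) = (\<lambda>i. c * Eop L m k u i)"
    unfolding Eop_def using linV_smul[OF linV_pow[OF lin] u]
    by (simp add: sum_distrib_left algebra_simps)
next
  fix u w assume u: "u \<in> Vg g" and w: "w \<in> Vg g"
  show "Eop L m k (\<lambda>i. u i + w i) = (\<lambda>i. Eop L m k u i + Eop L m k w i)"
    unfolding Eop_def using linV_add[OF linV_pow[OF lin] u w]
    by (simp add: sum.distrib[symmetric] algebra_simps)
qed

lemma C1:
  assumes v: "v \<in> Vg g" and v': "v' \<in> Vg g"
  shows "wedge (Eop L m k v) (Eop L m k v') i j = 0"
proof (rule ccontr)
  assume nz: "wedge (Eop L m k v) (Eop L m k v') i j \<noteq> 0"
  have "(zt m ^ k + zt m ^ k) ^ m = 1"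
    by (rule wc[OF E_in[OF lin m1 per v] E_in[OF lin m1 per v'] E_eig[OF lin m1 per v] E_eig[OF lin m1 per v'] nz])
  then have "norm (zt m ^ k + zt m ^ k) = 1" using power_eq_1_iff m1 by fastforce
  moreover have "norm (zt m ^ k + zt m ^ k) = 2"
    by (simp add: norm_mult norm_power zt_norm mult_2[symmetric])
  ultimately show False by simp
qed

definition "RR = {k. k < m \<and> (\<exists>v\<in>Vg g. Eop L m k v \<noteq> (\<lambda>i. 0))}"

lemma C2:
  assumes k: "k \<in> RR" and l: "l \<in> RR" and kl: "k \<noteq> l"
  shows "norm (zt m ^ k + zt m ^ l) = 1"
proof -
  obtain v where v: "v \<in> Vg g" and xnz: "Eop L m k v \<noteq> (\<lambda>i. 0)" using k by (auto simp: RR_def)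
  obtain v' where v': "v' \<in> Vg g" and ynz: "Eop L m l v' \<noteq> (\<lambda>i. 0)" using l by (auto simp: RR_def)
  define x where "x = Eop L m k v"
  define y where "y = Eop L m l v'"
  have xV: "x \<in> Vg g" and yV: "y \<in> Vg g" using E_in[OF lin m1 per] v v' by (auto simp: x_def y_def)
  have Lx: "L x = (\<lambda>i. zt m ^ k * x i)" using E_eig[OF lin m1 per v] by (simp add: x_def)
  have Ly: "L y = (\<lambda>i. zt m ^ l * y i)" using E_eig[OF lin m1 per v'] by (simp add: y_def)
  have "\<exists>i j. wedge x y i j \<noteq> 0"
  proof (rule ccontr)
    assume "\<not> (\<exists>i j. wedge x y i j \<noteq> 0)"
    then have wz: "\<And>i j. x i * y j - x j * y i = 0" by (auto simp: wedge_def)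
    obtain p where p: "x p \<noteq> 0" using xnz by (auto simp: x_def)
    obtain q where q: "y q \<noteq> 0" using ynz by (auto simp: y_def)
    define c where "c = y p / x p"
    have yc: "y = (\<lambda>i. c * x i)"
    proof
      fix i
      have "x p * y i = x i * y p" using wz[of p i] by simp
      then show "y i = c * x i" using p by (simp add: c_def field_simps)
    qed
    have "L y = (\<lambda>i. c * L x i)" using linV_smul[OF lin xV] yc by simp
    then have "L y = (\<lambda>i. zt m ^ k * y i)" using Lx yc by (simp add: algebra_simps)
    then have "zt m ^ k * y q = zt m ^ l * y q" using Ly by (metis)
    then have "zt m ^ k = zt m ^ l" using q by simp
    then show False using zt_inj[of m k l] k l kl m1 by (auto simp: RR_def)
  qed
  then obtain i j where "wedge x y i j \<noteq> 0" by blast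
  then have "(zt m ^ k + zt m ^ l) ^ m = 1" by (rule wc[OF xV yV Lx Ly])
  then show ?thesis using power_eq_1_iff m1 by fastforce
qed

lemma C3: "card RR \<le> 3"
proof (rule ccontr)
  assume "\<not> card RR \<le> 3"
  then have "4 \<le> card RR" by simp
  moreover have "finite RR" by (simp add: RR_def)
  ultimately obtain a b c d where abcd: "a \<in> RR" "b \<in> RR" "c \<in> RR" "d \<in> RR" "a \<noteq> b" "a \<noteq> c" "a \<noteq> d" "b \<noteq> c" "b \<noteq> d" "c \<noteq> d"
    using four_dist by blast
  show False
    by (rule four_units[of "zt m ^ a" "zt m ^ b" "zt m ^ c" "zt m ^ d"])
       (use abcd C2 in \<open>simp_all add: norm_power zt_norm\<close>)
qed

definition "ee t = (\<lambda>i. if i = t then 1 else (0::complex))"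

lemma ee_V: "t < g \<Longrightarrow> ee t \<in> Vg g" by (auto simp: ee_def Vg_def)

lemma decomp:
  assumes w: "w \<in> Vg g" shows "w = (\<lambda>i. \<Sum>t<g. w t * ee t i)"
proof
  fix x
  have "(\<Sum>t<g. w t * ee t x) = (\<Sum>t\<in>{..<g}. if x = t then w x else 0)"
    by (rule sum.cong[OF refl]) (simp add: ee_def)
  also have "\<dots> = (if x \<in> {..<g} then w x else 0)" by (simp add: sum.delta')
  also have "\<dots> = w x" using w by (auto simp: Vg_def)
  finally show "w x = (\<Sum>t<g. w t * ee t x)" by simp
qed

definition "tr k = (\<Sum>t<g. Eop L m k (ee t) t)"

lemma T0: "k \<notin> RR \<Longrightarrow> k < m \<Longrightarrow> tr k = 0"
  unfolding tr_def RR_def using ee_V by (auto intro!: sum.neutral simp: fun_eq_iff)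

lemma T1:
  assumes k: "k \<in> RR" shows "tr k = 1"
proof -
  obtain u0 where u0: "u0 \<in> Vg g" and wnz: "Eop L m k u0 \<noteq> (\<lambda>i. 0)" using k by (auto simp: RR_def)
  define w where "w = Eop L m k u0"
  have wV: "w \<in> Vg g" using E_in[OF lin m1 per u0] by (simp add: w_def)
  obtain p where p: "w p \<noteq> 0" using wnz by (auto simp: w_def)
  have Lw: "L w = (\<lambda>i. zt m ^ k * w i)" using E_eig[OF lin m1 per u0] by (simp add: w_def)
  have Ew: "Eop L m k w = w" by (rule E_fix[OF lin m1 per wV Lw])
  have rel: "Eop L m k v i * w p = Eop L m k v p * w i" if "v \<in> Vg g" for v i
    using C1[OF that u0, of k i p] by (simp add: wedge_def w_def)
  have "Eop L m k w = (\<lambda>i. \<Sum>t<g. w t * Eop L m k (ee t) i)"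
    using decomp[OF wV] lin_sum[OF E_lin, of "{..<g}" ee w] ee_V by simp
  then have wp: "w p = (\<Sum>t<g. w t * Eop L m k (ee t) p)" using Ew by metis
  have "tr k * w p = (\<Sum>t<g. Eop L m k (ee t) t * w p)" by (simp add: tr_def sum_distrib_right)
  also have "\<dots> = (\<Sum>t<g. w t * Eop L m k (ee t) p)"
    by (rule sum.cong[OF refl]) (use rel ee_V in \<open>auto simp: mult.commute\<close>)
  also have "\<dots> = w p" using wp by simp
  finally show ?thesis using p by simp
qed

lemma main_abs: "g \<le> 3"
proof -
  have "(\<Sum>k<m. tr k) = (\<Sum>t<g. \<Sum>k<m. Eop L m k (ee t) t)"
    unfolding tr_def by (rule sum.swap)
  also have "\<dots> = (\<Sum>t<g. ee t t)"
  proof (rule sum.cong[OF refl])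
    fix t assume "t \<in> {..<g}"
    then have "ee t \<in> Vg g" using ee_V by blast
    then show "(\<Sum>k<m. Eop L m k (ee t) t) = ee t t" by (rule E_sum[OF lin m1 per])
  qed
  also have "\<dots> = of_nat g" by (simp add: ee_def)
  finally have s1: "(\<Sum>k<m. tr k) = of_nat g" .
  have "(\<Sum>k<m. tr k) = (\<Sum>k\<in>RR. tr k)"
    by (rule sum.mono_neutral_right) (auto simp: RR_def T0)
  also have "\<dots> = (\<Sum>k\<in>RR. 1)" by (rule sum.cong[OF refl]) (rule T1)
  also have "\<dots> = of_nat (card RR)" by simp
  finally have "of_nat g = (of_nat (card RR) :: complex)" using s1 by simp
  then have "g = card RR" using of_nat_eq_iff by blast
  then show ?thesis using C3 by simp
qed

end

theorem proposition2p14: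
  fixes g :: nat
  assumes "1 \<le> g"
  shows "(\<exists>D. N2_derivation g D \<and> periodic_on (N2_carrier g) D) \<longleftrightarrow> g \<le> 3"
proof
  assume "\<exists>D. N2_derivation g D \<and> periodic_on (N2_carrier g) D"
  then obtain D where D: "N2_derivation g D" and p: "periodic_on (N2_carrier g) D" by blast
  show "g \<le> 3"
  proof (rule ccontr)
    assume "\<not> g \<le> 3"
    then have g2: "2 \<le> g" by simp
    obtain m where m1: "1 \<le> m" and per: "\<And>u. u \<in> Vg g \<Longrightarrow> (Lop D ^^ m) u = u"
      and perD: "\<And>x. x \<in> N2_carrier g \<Longrightarrow> (D ^^ m) x = x"
      using L_per[OF D g2 p] by blast
    have "g \<le> 3"
    proof (rule main_abs[of g "Lop D" m])
      show "linV g (Lop D)" by (rule L_lin[OF D])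
      show "1 \<le> m" by (rule m1)
      show "\<forall>u\<in>Vg g. (Lop D ^^ m) u = u" using per by blast
      fix u w \<alpha> \<gamma> i j
      assume "u \<in> Vg g" "w \<in> Vg g" "Lop D u = (\<lambda>i. \<alpha> * u i)" "Lop D w = (\<lambda>i. \<gamma> * w i)"
        "wedge u w i j \<noteq> 0"
      then show "(\<alpha> + \<gamma>) ^ m = 1"
        using wedge_cond[OF D g2 p, of u w \<alpha> \<gamma> i j m] perD by blast
    qed
    then show False using \<open>\<not> g \<le> 3\<close> by simp
  qed
next
  assume "g \<le> 3"
  then show "\<exists>D. N2_derivation g D \<and> periodic_on (N2_carrier g) D" by (rule easy)
qed

end
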